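(* Let $L$ be an infinite set and let $Q$ be either the edgeless cube $Q_L$ or the edged cube $\bar Q_L$. Every well-ordering $\preceq$ of $L$ can be coded into a configuration accessible from $f_{\mathrm{solved}}$; in particular, there is an injective map from the set of ordinals $\theta$ with $|L|\le\theta<|L|^+$ into the set of configurations of $Q$ accessible from $f_{\mathrm{solved}}$.
   Context: Let $L$ be an infinite set, $-L=\{-r:r\in L\}$ a disjoint copy of $L$, and $0$ a new element; $L^\dagger=-L\cup\{0\}\cup L$ with $-(-r)=r$, $-0=0$. Adjoin $\pm\infty$ with $-(+\infty)=-\infty$ and set $\bar L^\dagger=L^\dagger\cup\{\pm\infty\}$. Points of $U=(\bar L^\dagger)^3$ have coordinates $x,y,z$. The edgeless cube $Q_L$ is the set of points of $U$ with exactly one coordinate in $\{\pm\infty\}$ (cells). The edged cube $\bar Q_L$ is the set of cells $(p,i)$ with $p\in U$, $i\in\{x,y,z\}$, $p_i\in\{\pm\infty\}$ ($i$ marks the face). For $i\in\{x,y,z\}$, $\alpha\in\bar L^\dagger$, the quarter-turn twist $T_{i,\alpha}$ is the permutation of cells fixing every cell whose point $p$ has $p_i\ne\alpha$ and acting on the others by $T_{x,\alpha}(\alpha,y,z)=(\alpha,-z,y)$, $T_{y,\alpha}(x,\alpha,z)=(z,\alpha,-x)$, $T_{z,\alpha}(x,y,\alpha)=(-y,x,\alpha)$ (in $\bar Q_L$ the marked coordinate is carried along by the rotation). Basic twists are $T,T^2,T^3$ for quarter-turn twists $T$. A basic sequence is a sequence $\langle\sigma_\eta:\eta<\theta\rangle$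 of basic twists of ordinal length $\theta$. A configuration is a map $f$ from cells to the six colors red, white, green, orange, yellow, blue together with a special value NaC. The solved configuration $f_{\mathrm{solved}}$ colors a cell red, blue, white, orange, green, yellow according as its face is $x=+\infty$, $y=+\infty$, $z=+\infty$, $x=-\infty$, $y=-\infty$, $z=-\infty$ (in $\bar Q_L$, the face is the marked coordinate with its sign). A twist $\sigma$ acts by $(\sigma f)(c)=f(\sigma^{-1}c)$. Applying $\langle\sigma_\eta:\eta<\theta\rangle$ to $f_0$ produces $f_{\eta+1}=\sigma_\eta f_\eta$, and for limit $\lambda\le\theta$, $f_\lambda(c)$ is the eventually constant value of $f_\eta(c)$ ($\eta<\lambda$) if it exists and NaC otherwise; $f_\theta$ is the terminal configuration. $f$ is accessible from $f_0$ if it is the terminal configuration of some basic sequence applied to $f_0$. *)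

theory Defs
  imports Main
begin

(* Coordinates in \<bar>L\<dagger> with L = UNIV :: 'a set:  r, -r, 0, +\<infinity>, -\<infinity> *)
datatype 'a coord = Pos 'a | Neg 'a | Zero | PInf | NInf

fun cneg :: "'a coord \<Rightarrow> 'a coord" where
  "cneg (Pos r) = Neg r" | "cneg (Neg r) = Pos r" | "cneg Zero = Zero"
| "cneg PInf = NInf" | "cneg NInf = PInf"

definition is_inf :: "'a coord \<Rightarrow> bool" where
  "is_inf a \<longleftrightarrow> a = PInf \<or> a = NInf"

datatype axis = AX | AY | AZ

type_synonym 'a point = "'a coord \<times> 'a coord \<times> 'a coord"
(* a cell: a point together with a marked axis (face) *)
type_synonym 'a cell = "'a point \<times> axis"

fun get :: "'a point \<Rightarrow> axis \<Rightarrow> 'a coord" where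
  "get (a, b, c) AX = a" | "get (a, b, c) AY = b" | "get (a, b, c) AZ = c"

fun rot :: "axis \<Rightarrow> 'a point \<Rightarrow> 'a point" where
  "rot AX (a, b, c) = (a, cneg c, b)"
| "rot AY (a, b, c) = (c, b, cneg a)"
| "rot AZ (a, b, c) = (cneg b, a, c)"

(* how the marked axis is carried along by the rotation *)
fun rax :: "axis \<Rightarrow> axis \<Rightarrow> axis" where
  "rax AX AX = AX" | "rax AX AY = AZ" | "rax AX AZ = AY"
| "rax AY AX = AZ" | "rax AY AY = AY" | "rax AY AZ = AX"
| "rax AZ AX = AY" | "rax AZ AY = AX" | "rax AZ AZ = AZ"

definition twist :: "axis \<Rightarrow> 'a coord \<Rightarrow> 'a cell \<Rightarrow> 'a cell" where
  "twist i \<alpha> c = (case c of (p, j) \<Rightarrow>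
      if get p i = \<alpha> then (rot i p, rax i j) else (p, j))"

(* Edgeless cube: points with exactly one infinite coordinate; the mark is
   then the unique infinite coordinate (so it is redundant). *)
definition edged_cube :: "'a cell set" where
  "edged_cube = {(p, i). is_inf (get p i)}"

definition edgeless_cube :: "'a cell set" where
  "edgeless_cube = {(p, i). is_inf (get p i) \<and> (\<forall>j. j \<noteq> i \<longrightarrow> \<not> is_inf (get p j))}"

definition cube :: "bool \<Rightarrow> 'a cell set" where
  "cube edged = (if edged then edged_cube else edgeless_cube)"

datatype color = Red | White | Green | Orange | Yellow | Blue | NaC

type_synonym 'a config = "'a cell \<Rightarrow> color"

fun face_color :: "axis \<Rightarrow> 'a coord \<Rightarrow> color" where
  "face_color AX PInf = Red" | "face_color AY PInf = Blue" | "face_color AZ PInf = White"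
| "face_color AX NInf = Orange" | "face_color AY NInf = Green" | "face_color AZ NInf = Yellow"
| "face_color _ _ = NaC"

definition solved :: "'a cell set \<Rightarrow> 'a config" where
  "solved Q c = (case c of (p, i) \<Rightarrow> if (p, i) \<in> Q then face_color i (get p i) else NaC)"

(* basic twist: (i, \<alpha>, k) stands for T_{i,\<alpha>}^k, k \<in> {1,2,3} *)
type_synonym 'a btwist = "axis \<times> 'a coord \<times> nat"

definition basic_perm :: "'a btwist \<Rightarrow> 'a cell \<Rightarrow> 'a cell" where
  "basic_perm t = (case t of (i, \<alpha>, k) \<Rightarrow> twist i \<alpha> ^^ k)"

definition act :: "'a btwist \<Rightarrow> 'a config \<Rightarrow> 'a config" where
  "act t f = f \<circ> inv (basic_perm t)"

(* A basic sequence of ordinal length \<theta> is indexed by the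
   field of a well-order W (of type \<theta>); stages \<eta> \<le> \<theta> are Some \<eta> (\<eta> in Field W)
   and None (= \<theta>, the terminal stage).  below W p is the set of indices < p. *)
definition below :: "'i rel \<Rightarrow> 'i option \<Rightarrow> 'i set" where
  "below W p = (case p of None \<Rightarrow> Field W | Some b \<Rightarrow> {a. (a, b) \<in> W \<and> a \<noteq> b})"

definition stages :: "'i rel \<Rightarrow> 'i option set" where
  "stages W = insert None (Some ` Field W)"

(* value at a limit stage: the eventually constant value, or NaC *)
definition lim_val :: "'i rel \<Rightarrow> 'i set \<Rightarrow> ('i \<Rightarrow> 'a config) \<Rightarrow> 'a config" where
  "lim_val W B g c =
     (if \<exists>v. \<exists>a\<in>B. \<forall>b\<in>B. (a, b) \<in> W \<longrightarrow> g b c = v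
      then (THE v. \<exists>a\<in>B. \<forall>b\<in>B. (a, b) \<in> W \<longrightarrow> g b c = v) else NaC)"

definition is_run :: "'i rel \<Rightarrow> ('i \<Rightarrow> 'a btwist) \<Rightarrow> 'a config \<Rightarrow> ('i option \<Rightarrow> 'a config) \<Rightarrow> bool" where
  "is_run W \<sigma> f0 F \<longleftrightarrow>
     (\<forall>p\<in>stages W.
        (below W p = {} \<longrightarrow> F p = f0)
      \<and> (\<forall>m\<in>below W p. (\<forall>b\<in>below W p. (b, m) \<in> W) \<longrightarrow> F p = act (\<sigma> m) (F (Some m)))
      \<and> (below W p \<noteq> {} \<and> \<not> (\<exists>m\<in>below W p. \<forall>b\<in>below W p. (b, m) \<in> W)
           \<longrightarrow> F p = lim_val W (below W p) (\<lambda>b. F (Some b))))"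

definition basic_seq :: "'i rel \<Rightarrow> ('i \<Rightarrow> 'a btwist) \<Rightarrow> bool" where
  "basic_seq W \<sigma> \<longleftrightarrow> Well_order W \<and> (\<forall>\<eta>\<in>Field W. snd (snd (\<sigma> \<eta>)) \<in> {1, 2, 3})"

definition terminal :: "'i rel \<Rightarrow> ('i \<Rightarrow> 'a btwist) \<Rightarrow> 'a config \<Rightarrow> 'a config \<Rightarrow> bool" where
  "terminal W \<sigma> f0 f \<longleftrightarrow> (\<exists>F. is_run W \<sigma> f0 F \<and> F None = f)"

definition accessible :: "'a config \<Rightarrow> 'a config \<Rightarrow> bool" where
  "accessible f0 f \<longleftrightarrow>
     (\<exists>(W :: 'a set rel) \<sigma>. basic_seq W \<sigma> \<and> terminal W \<sigma> f0 f)"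

end

theory Submission
  imports Defs
begin

definition xc :: "'a cell \<Rightarrow> 'a coord" where "xc c = fst (fst c)"

definition UU :: "'a cell \<Rightarrow> 'a cell" where
  "UU c = (case c of ((a, b, d), j) \<Rightarrow> ((a, d, cneg b), rax AX j))"

definition untw :: "'a coord \<Rightarrow> 'a cell \<Rightarrow> 'a cell" where
  "untw \<alpha> c = (if xc c = \<alpha> then UU c else c)"

definition conf :: "'a cell set \<Rightarrow> 'a set \<Rightarrow> 'a config" where
  "conf Q R c = solved Q (if xc c \<in> Pos ` R then UU c else c)"

lemma cneg_cneg[simp]: "cneg (cneg a) = a" by (cases a) auto
lemma rax_AX[simp]: "rax AX (rax AX j) = j" by (cases j) auto
lemma xc_UU[simp]: "xc (UU c) = xc c"
  by (cases c) (auto simp: UU_def xc_def split: prod.splits)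

lemma twist_untw: "twist AX \<alpha> (untw \<alpha> c) = c"
  by (cases c) (auto simp: twist_def untw_def UU_def xc_def split: prod.splits)
lemma untw_twist: "untw \<alpha> (twist AX \<alpha> c) = c"
  by (cases c) (auto simp: twist_def untw_def UU_def xc_def split: prod.splits)

lemma inv_twist: "inv (twist AX \<alpha>) = untw \<alpha>"
proof -
  have "bij (twist AX \<alpha>)"
    by (metis bij_betw_byWitness[of UNIV "untw \<alpha>" "twist AX \<alpha>" UNIV] twist_untw untw_twist
        UNIV_I subsetI image_subset_iff)
  show ?thesis
    by (rule ext, metis inv_f_f[OF bij_is_inj[OF \<open>bij _\<close>]] twist_untw)
qed

lemma act_conf:
  assumes "r \<notin> R"
  shows "act (AX, Pos r, 1) (conf Q R) = conf Q (insert r R)"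
proof
  fix c
  have bp: "basic_perm (AX, Pos r, 1) = twist AX (Pos r)"
    by (simp add: basic_perm_def)
  show "act (AX, Pos r, 1) (conf Q R) c = conf Q (insert r R) c"
    using assms unfolding act_def bp inv_twist comp_def
    by (auto simp: conf_def untw_def)
qed

lemma wo_facts:
  assumes "Well_order W"
  shows "trans W" "antisym W" "total_on (Field W) W" "\<And>x. x \<in> Field W \<Longrightarrow> (x, x) \<in> W"
  using assms
  by (auto simp: well_order_on_def linear_order_on_def partial_order_on_def
      preorder_on_def refl_on_def)

lemma below_Field: "below W p \<subseteq> Field W"
  by (auto simp: below_def FieldI1 split: option.splits)

lemma below_mono:
  assumes "Well_order W" "b \<in> below W p"
  shows "below W (Some b) \<subseteq> below W p"
proof
  fix a assume a: "a \<in> below W (Some b)"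
  then have ab: "(a, b) \<in> W" "a \<noteq> b" by (auto simp: below_def)
  show "a \<in> below W p"
  proof (cases p)
    case None then show ?thesis using ab by (auto simp: below_def FieldI1)
  next
    case (Some q)
    then have bq: "(b, q) \<in> W" "b \<noteq> q" using assms(2) by (auto simp: below_def)
    have "(a, q) \<in> W" using wo_facts(1)[OF assms(1)] ab bq by (meson transD)
    moreover have "a \<noteq> q"
      using wo_facts(2)[OF assms(1)] ab bq by (metis antisymD)
    ultimately show ?thesis using Some by (auto simp: below_def)
  qed
qed

lemma lim_val_eq:
  assumes W: "Well_order W" and B: "B \<subseteq> Field W" and a: "a \<in> B"
    and h: "\<forall>b\<in>B. (a, b) \<in> W \<longrightarrow> g b c = v"
  shows "lim_val W B g c = v"
proof -
  have ex: "\<exists>a\<in>B. \<forall>b\<in>B. (a, b) \<in> W \<longrightarrow> g b c = v" using a h by blast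
  have c: "\<exists>v. \<exists>a\<in>B. \<forall>b\<in>B. (a, b) \<in> W \<longrightarrow> g b c = v" using ex by blast
  have the_eq: "(THE v. \<exists>a\<in>B. \<forall>b\<in>B. (a, b) \<in> W \<longrightarrow> g b c = v) = v"
  proof (rule the_equality)
    fix v' assume "\<exists>a\<in>B. \<forall>b\<in>B. (a, b) \<in> W \<longrightarrow> g b c = v'"
    then obtain a' where a': "a' \<in> B" "\<forall>b\<in>B. (a', b) \<in> W \<longrightarrow> g b c = v'" by blast
    show "v' = v"
    proof (cases "(a, a') \<in> W")
      case True
      have "(a', a') \<in> W" using wo_facts(4)[OF W] a' B by blast
      then show ?thesis using True h a' by metis
    next
      case False
      then have "a \<noteq> a'" using wo_facts(4)[OF W] a B by blast
      then have "(a', a) \<in> W" using False wo_facts(3)[OF W] a a' B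
        by (meson subsetD total_on_def)
      moreover have "(a, a) \<in> W" using wo_facts(4)[OF W] a B by blast
      ultimately show ?thesis using h a' a by metis
    qed
  qed (use ex in blast)
  show ?thesis unfolding lim_val_def if_P[OF c] by (rule the_eq)
qed

lemma run_lemma:
  assumes W: "Well_order W" and inj: "inj_on \<iota> (Field W)"
  shows "is_run W (\<lambda>m. (AX, Pos (\<iota> m), 1)) (conf Q {}) (\<lambda>p. conf Q (\<iota> ` below W p))"
  unfolding is_run_def
proof (intro ballI conjI impI)
  fix p
  show "below W p = {} \<Longrightarrow> conf Q (\<iota> ` below W p) = conf Q {}" by simp
next
  fix p m
  assume m: "m \<in> below W p" and mx: "\<forall>b\<in>below W p. (b, m) \<in> W"
  have eq: "below W p = insert m (below W (Some m))"
  proof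
    show "below W p \<subseteq> insert m (below W (Some m))"
      using mx by (auto simp: below_def)
    show "insert m (below W (Some m)) \<subseteq> below W p"
      using m below_mono[OF W m] by blast
  qed
  have "m \<in> Field W" using m below_Field[of W p] by blast
  moreover have "m \<notin> below W (Some m)" by (simp add: below_def)
  ultimately have "\<iota> m \<notin> \<iota> ` below W (Some m)"
    using inj below_Field[of W "Some m"] by (meson inj_on_image_mem_iff)
  then show "conf Q (\<iota> ` below W p) = act (AX, Pos (\<iota> m), 1) (conf Q (\<iota> ` below W (Some m)))"
    unfolding eq image_insert by (rule act_conf[symmetric])
next
  fix p
  assume lim: "below W p \<noteq> {} \<and> \<not> (\<exists>m\<in>below W p. \<forall>b\<in>below W p. (b, m) \<in> W)"
  define B where "B = below W p"
  have BF: "B \<subseteq> Field W" using below_Field[of W p] B_def by blast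
  show "conf Q (\<iota> ` below W p) = lim_val W (below W p) (\<lambda>b. conf Q (\<iota> ` below W (Some b)))"
  proof
    fix c
    show "conf Q (\<iota> ` below W p) c = lim_val W (below W p) (\<lambda>b. conf Q (\<iota> ` below W (Some b))) c"
    proof (cases "\<exists>i\<in>B. xc c = Pos (\<iota> i)")
      case True
      then obtain i where i: "i \<in> B" "xc c = Pos (\<iota> i)" by blast
      then obtain a where a: "a \<in> B" "(a, i) \<notin> W" using lim B_def by blast
      have ia: "(i, a) \<in> W"
        using a i BF wo_facts(3)[OF W] wo_facts(4)[OF W] unfolding total_on_def
        by (metis subsetD)
      show ?thesis unfolding B_def[symmetric]
      proof (rule sym, rule lim_val_eq[OF W BF a(1)], intro ballI impI)
        fix b assume b: "b \<in> B" "(a, b) \<in> W"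
        have "(i, b) \<in> W" using ia b wo_facts(1)[OF W] by (meson transD)
        moreover have "i \<noteq> b" using a b by blast
        ultimately have "i \<in> below W (Some b)" by (simp add: below_def)
        then show "conf Q (\<iota> ` below W (Some b)) c = conf Q (\<iota> ` B) c"
          using i by (auto simp: conf_def)
      qed
    next
      case False
      obtain a where a: "a \<in> B" using lim B_def by blast
      show ?thesis unfolding B_def[symmetric]
      proof (rule sym, rule lim_val_eq[OF W BF a(1)], intro ballI impI)
        fix b assume b: "b \<in> B" "(a, b) \<in> W"
        have "below W (Some b) \<subseteq> B" using below_mono[OF W] b B_def by blast
        then show "conf Q (\<iota> ` below W (Some b)) c = conf Q (\<iota> ` B) c"
          using False by (auto simp: conf_def)
      qed
    qed
  qed
qed

lemma in_cube1: "((Pos r, PInf, Zero), AY) \<in> cube e"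
proof -
  have "\<forall>j. j \<noteq> AY \<longrightarrow> \<not> is_inf (get (Pos r, PInf, Zero) j)"
  proof (intro allI impI)
    fix j :: axis assume "j \<noteq> AY" then show "\<not> is_inf (get (Pos r, PInf, Zero) j)"
      by (cases j) (auto simp: is_inf_def)
  qed
  then show ?thesis by (simp add: cube_def edged_cube_def edgeless_cube_def is_inf_def)
qed

lemma in_cube2: "((Pos r, Zero, PInf), AZ) \<in> cube e"
proof -
  have "\<forall>j. j \<noteq> AZ \<longrightarrow> \<not> is_inf (get (Pos r, Zero, PInf) j)"
  proof (intro allI impI)
    fix j :: axis assume "j \<noteq> AZ" then show "\<not> is_inf (get (Pos r, Zero, PInf) j)"
      by (cases j) (auto simp: is_inf_def)
  qed
  then show ?thesis by (simp add: cube_def edged_cube_def edgeless_cube_def is_inf_def)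
qed

lemma conf_key:
  assumes r: "r \<in> R" "r \<notin> R'"
  shows "conf (cube e) R \<noteq> conf (cube e) R'"
proof -
  define c0 :: "'a cell" where "c0 = ((Pos r, Zero, PInf), AZ)"
  have u: "UU c0 = ((Pos r, PInf, Zero), AY)" by (simp add: UU_def c0_def)
  have x: "xc c0 = Pos r" by (simp add: xc_def c0_def)
  have "conf (cube e) R c0 = solved (cube e) ((Pos r, PInf, Zero), AY)"
    using r by (simp add: conf_def u x)
  also have "\<dots> = Blue" using in_cube1[of r e] by (simp add: solved_def)
  finally have 1: "conf (cube e) R c0 = Blue" .
  have "Pos r \<notin> Pos ` R'" using r by auto
  then have "conf (cube e) R' c0 = solved (cube e) c0"
    by (simp add: conf_def x)
  also have "\<dots> = White" using in_cube2[of r e] by (simp add: solved_def c0_def)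
  finally show ?thesis using 1 by (metis color.distinct)
qed

lemma conf_inj:
  assumes "conf (cube edged) R = conf (cube edged) R'"
  shows "R = R'"
proof (rule ccontr)
  assume "R \<noteq> R'"
  then obtain r where "(r \<in> R \<and> r \<notin> R') \<or> (r \<in> R' \<and> r \<notin> R)" by blast
  then show False
  proof
    assume "r \<in> R \<and> r \<notin> R'"
    then show False using conf_key[of r R R' edged] assms by simp
  next
    assume "r \<in> R' \<and> r \<notin> R"
    then show False using conf_key[of r R' R edged] assms by simp
  qed
qed

lemma acc_lemma:
  fixes S :: "'a set"
  shows "accessible (solved (cube edged)) (conf (cube edged) S)"
proof -
  obtain w :: "'a set rel" where w0: "Well_order w \<and> Field w = UNIV"
    using well_ordering[where 'a="'a set"] by (elim exE)
  then have w: "Well_order w" "Field w = UNIV" by blast+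
  define W where "W = Restr w ((\<lambda>x. {x}) ` S)"
  have WW: "Well_order W" unfolding W_def by (rule Well_order_Restr[OF w(1)])
  have FW: "Field W = (\<lambda>x. {x}) ` S"
  proof
    show "Field W \<subseteq> (\<lambda>x. {x}) ` S" unfolding W_def by (rule Field_Restr_subset)
    show "(\<lambda>x. {x}) ` S \<subseteq> Field W"
    proof
      fix y assume y: "y \<in> (\<lambda>x. {x}) ` S"
      have "(y, y) \<in> w" using wo_facts(4)[OF w(1)] w(2) by blast
      then have "(y, y) \<in> W" using y by (simp add: W_def)
      then show "y \<in> Field W" by (rule FieldI1)
    qed
  qed
  have inj: "inj_on the_elem (Field W)" unfolding FW by (auto simp: inj_on_def)
  have img: "the_elem ` Field W = S" unfolding FW by (auto simp: image_image)
  have cs: "conf (cube edged) {} = solved (cube edged)"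
    by (auto simp: conf_def)
  have "basic_seq W (\<lambda>m. (AX, Pos (the_elem m), 1))"
    using WW by (simp add: basic_seq_def)
  moreover have "terminal W (\<lambda>m. (AX, Pos (the_elem m), 1)) (solved (cube edged)) (conf (cube edged) S)"
    unfolding terminal_def
  proof (intro exI conjI)
    show "is_run W (\<lambda>m. (AX, Pos (the_elem m), 1)) (solved (cube edged))
        (\<lambda>p. conf (cube edged) (the_elem ` below W p))"
      using run_lemma[OF WW inj, of "cube edged"] unfolding cs .
    have "below W None = Field W" by (simp add: below_def)
    then show "conf (cube edged) (the_elem ` below W None) = conf (cube edged) S"
      using img by simp
  qed
  ultimately show ?thesis unfolding accessible_def by blast
qed

theorem mainTheorem20:
  fixes edged :: bool
  assumes "infinite (UNIV :: 'a set)"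
  shows "\<exists>code :: 'a rel \<Rightarrow> 'a config.
           (\<forall>r. well_order_on UNIV r \<longrightarrow>
                  accessible (solved (cube edged)) (code r))
         \<and> (\<forall>r s. well_order_on UNIV r \<and> well_order_on UNIV s \<and> code r = code s
                  \<longrightarrow> (r, s) \<in> BNF_Wellorder_Constructions.ordIso)"
proof -
  obtain h :: "'a \<times> 'a \<Rightarrow> 'a" where h: "bij_betw h (UNIV \<times> UNIV) UNIV"
    using card_of_ordIso[THEN iffD2, OF card_of_Times_same_infinite[OF assms]] by (elim exE)
  then have injh: "inj h" by (simp add: bij_betw_def)
  show ?thesis
  proof (intro exI[of _ "\<lambda>r. conf (cube edged) (h ` r)"] conjI allI impI)
    fix r :: "'a rel"
    show "accessible (solved (cube edged)) (conf (cube edged) (h ` r))" by (rule acc_lemma)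
  next
    fix r s :: "'a rel"
    assume a: "well_order_on UNIV r \<and> well_order_on UNIV s \<and> conf (cube edged) (h ` r) = conf (cube edged) (h ` s)"
    then have "h ` r = h ` s" using conf_inj[of edged "h ` r" "h ` s"] by simp
    then have "r = s" using injh by (simp add: inj_image_eq_iff)
    moreover have "Well_order r" using a well_order_on_Field[of UNIV r] by simp
    ultimately show "(r, s) \<in> BNF_Wellorder_Constructions.ordIso"
      using ordIso_reflexive by blast
  qed
qed

end
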